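(* Let $\mathcal{X}$ be an input space, $P$ a real normed vector space (the parameter space) with norm $\|\cdot\|$, and $\mathcal{T}:\mathcal{X}\times P\to\mathcal{X}$ a transformation satisfying $\mathcal{T}(x,0)=x$ and $\mathcal{T}(\mathcal{T}(x,\theta_1),\theta_2)=\mathcal{T}(x,\theta_1+\theta_2)$ for all $x\in\mathcal{X}$, $\theta_1,\theta_2\in P$. Define $d_{\mathcal{T}}(x_1,x_2)=\min\{\|\theta\| : \mathcal{T}(x_1,\theta)=x_2\}$ if some $\theta$ with $\mathcal{T}(x_1,\theta)=x_2$ exists, and $d_{\mathcal{T}}(x_1,x_2)=\infty$ otherwise. Let $\mathcal{Q}(0)$ be a probability distribution on $P$, and for $\theta\in P$ let $\mathcal{Q}(\theta)$ be the distribution of $\theta+\delta$ with $\delta\sim\mathcal{Q}(0)$; assume $\mathrm{TV}(\mathcal{Q}(0),\mathcal{Q}(\theta))\le\psi(\|\theta\|)$ for all $\theta\in P$, for a concave function $\psi$. Define the smoothing distribution $\mathcal{S}(x)$ as the distribution of $\mathcal{T}(x,\delta)$ with $\delta\sim\mathcal{Q}(0)$. Then for any $x_1,x_2\in\mathcal{X}$ with $d_{\mathcal{T}}(x_1,x_2)$ finite, \[\mathrm{TV}(\mathcal{S}(x_1),\mathcal{S}(x_2))\le \psi(d_{\mathcal{T}}(x_1,x_2)).\]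
   Context: $\mathrm{TV}$ denotes the total variation distance between probability distributions. *)

theory Defs
  imports "HOL-Probability.Probability"
begin

definition tv_dist :: "'a measure \<Rightarrow> 'a measure \<Rightarrow> real" where
  "tv_dist M N = (SUP A\<in>sets M. \<bar>measure M A - measure N A\<bar>)"

text \<open>Transformation-based distance d_T(x1,x2): the least norm of a parameter
  theta with T x1 theta = x2, and infinity if no such parameter exists.
  (The minimum is written as an infimum; where the paper's min exists they agree.)\<close>
definition d_T :: "('x \<Rightarrow> 'p::real_normed_vector \<Rightarrow> 'x) \<Rightarrow> 'x \<Rightarrow> 'x \<Rightarrow> ereal" where
  "d_T T x1 x2 = (if \<exists>\<theta>. T x1 \<theta> = x2
                   then ereal (Inf {norm \<theta> | \<theta>. T x1 \<theta> = x2}) else \<infinity>)"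

definition shifted :: "'p::real_normed_vector measure \<Rightarrow> 'p \<Rightarrow> 'p measure" where
  "shifted Q0 \<theta> = distr Q0 borel (\<lambda>\<delta>. \<theta> + \<delta>)"

definition smoothing :: "'x measure \<Rightarrow> ('x \<Rightarrow> 'p \<Rightarrow> 'x) \<Rightarrow> 'p measure \<Rightarrow> 'x \<Rightarrow> 'x measure" where
  "smoothing MX T Q0 x = distr Q0 MX (T x)"

end

theory Submission
  imports Defs
begin

theorem lemma1:
  fixes MX :: "'x measure"
    and T :: "'x \<Rightarrow> 'p::real_normed_vector \<Rightarrow> 'x"
    and Q0 :: "'p measure"
    and \<psi> :: "real \<Rightarrow> real"
    and x1 x2 :: 'x
  assumes T_meas: "\<And>x. x \<in> space MX \<Longrightarrow> T x \<in> borel \<rightarrow>\<^sub>M MX"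
    and T_zero: "\<And>x. x \<in> space MX \<Longrightarrow> T x 0 = x"
    and T_add: "\<And>x \<theta>1 \<theta>2. x \<in> space MX \<Longrightarrow> T (T x \<theta>1) \<theta>2 = T x (\<theta>1 + \<theta>2)"
    and Q0_prob: "prob_space Q0"
    and Q0_sets: "sets Q0 = sets borel"
    and TV_bound: "\<And>\<theta>. tv_dist Q0 (shifted Q0 \<theta>) \<le> \<psi> (norm \<theta>)"
    and \<psi>_concave: "concave_on {0..} \<psi>"
    and x1: "x1 \<in> space MX" and x2: "x2 \<in> space MX"
    and min_exists: "\<exists>\<theta>. T x1 \<theta> = x2 \<and> (\<forall>\<theta>'. T x1 \<theta>' = x2 \<longrightarrow> norm \<theta> \<le> norm \<theta>')"
  shows "tv_dist (smoothing MX T Q0 x1) (smoothing MX T Q0 x2) \<le> \<psi> (real_of_ereal (d_T T x1 x2))"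
proof -
  obtain t where t: "T x1 t = x2" and tmin: "\<And>t'. T x1 t' = x2 \<Longrightarrow> norm t \<le> norm t'"
    using min_exists by blast
  have inf: "Inf {norm \<theta> | \<theta>. T x1 \<theta> = x2} = norm t"
    by (rule cInf_eq_minimum) (use t tmin in auto)
  have d: "real_of_ereal (d_T T x1 x2) = norm t"
    unfolding d_T_def using t inf by auto
  have spQ: "space Q0 = UNIV" using sets_eq_imp_space_eq[OF Q0_sets] by simp
  have addm: "(\<lambda>\<delta>. t + \<delta>) \<in> Q0 \<rightarrow>\<^sub>M borel"
  proof -
    have "(\<lambda>\<delta>. t + \<delta>) \<in> borel \<rightarrow>\<^sub>M borel"
      by (intro borel_measurable_continuous_onI continuous_intros)
    then show ?thesis unfolding measurable_cong_sets[OF Q0_sets refl, of borel] .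
  qed
  have Tm: "T x1 \<in> Q0 \<rightarrow>\<^sub>M MX"
    using T_meas[OF x1] measurable_cong_sets[OF Q0_sets refl] by auto
  have S2: "smoothing MX T Q0 x2 = distr (shifted Q0 t) MX (T x1)"
    unfolding smoothing_def shifted_def
    apply (subst distr_distr[OF T_meas[OF x1] addm])
    apply (rule distr_cong)
    using T_add[OF x1] t by (auto simp: o_def)
  interpret Q: prob_space Q0 by (rule Q0_prob)
  have Ps: "prob_space (shifted Q0 t)"
    unfolding shifted_def by (rule Q.prob_space_distr[OF addm])
  have sS: "sets (shifted Q0 t) = sets borel" unfolding shifted_def by simp
  have bdd: "bdd_above ((\<lambda>A. \<bar>measure Q0 A - measure (shifted Q0 t) A\<bar>) ` sets Q0)"
  proof (rule bdd_aboveI2)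
    fix A
    have "measure Q0 A \<le> 1" "measure (shifted Q0 t) A \<le> 1"
      using Q.prob_le_1 prob_space.prob_le_1[OF Ps] by auto
    moreover have "measure Q0 A \<ge> 0" "measure (shifted Q0 t) A \<ge> 0" by auto
    ultimately show "\<bar>measure Q0 A - measure (shifted Q0 t) A\<bar> \<le> 2" by linarith
  qed
  have "tv_dist (smoothing MX T Q0 x1) (smoothing MX T Q0 x2) \<le> tv_dist Q0 (shifted Q0 t)"
    unfolding tv_dist_def
  proof (rule cSUP_least)
    show "sets (smoothing MX T Q0 x1) \<noteq> {}" by auto
  next
    fix A assume "A \<in> sets (smoothing MX T Q0 x1)"
    then have A: "A \<in> sets MX" unfolding smoothing_def by simp
    have B: "T x1 -` A \<in> sets Q0" using measurable_sets[OF Tm A] spQ by simp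
    have e1: "measure (smoothing MX T Q0 x1) A = measure Q0 (T x1 -` A)"
      unfolding smoothing_def using measure_distr[OF Tm A] spQ by simp
    have Tm2: "T x1 \<in> shifted Q0 t \<rightarrow>\<^sub>M MX"
      using T_meas[OF x1] measurable_cong_sets[OF sS refl] by auto
    have sp2: "space (shifted Q0 t) = UNIV" unfolding shifted_def by simp
    have e2: "measure (smoothing MX T Q0 x2) A = measure (shifted Q0 t) (T x1 -` A)"
      unfolding S2 using measure_distr[OF Tm2 A] sp2 by simp
    show "\<bar>measure (smoothing MX T Q0 x1) A - measure (smoothing MX T Q0 x2) A\<bar>
       \<le> (SUP A\<in>sets Q0. \<bar>measure Q0 A - measure (shifted Q0 t) A\<bar>)"
      unfolding e1 e2 by (rule cSUP_upper[OF B bdd])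
  qed
  also have "\<dots> \<le> \<psi> (norm t)" by (rule TV_bound)
  finally show ?thesis unfolding d .
qed

end
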